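(* Let $S=\{v_1,\ldots,v_n\}\subset\mathbb Z^n$ ($n\ge1$) be an orthogonal subset with $|V_\alpha|\ge2$ for all $\alpha$ and $\mathcal P_2=\mathcal Q_2$. Then the lattice generated by $S$ is not cubiquitous.
   Context: $\mathbb Z^n$ carries the standard dot product with standard basis $e_1,\ldots,e_n$. $S$ is orthogonal if $\langle v_\alpha,v_\alpha\rangle\ge1$ for all $\alpha$ and $\langle v_\alpha,v_\beta\rangle=0$ for $\alpha\ne\beta$. $V_\alpha=\{j:\langle v_\alpha,e_j\rangle\ne0\}$, $E_j=\{\alpha:\langle v_\alpha,e_j\rangle\ne0\}$, $\mathcal P_2=\{j:|E_j|=2\}$, and $\mathcal Q_2=\{i\in\mathcal P_2: |\langle v_u,e_i\rangle|\ge2 \text{ for some } u\in E_i\}$. A full-rank sublattice $\Lambda\subset\mathbb Z^n$ is cubiquitous if $\Lambda\cap(x+\{0,1\}^n)\ne\emptyset$ for every $x\in\mathbb Z^n$. *)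

theory Defs
  imports Main
begin

(* Vectors of Z^n are functions 'n => int on a finite index type 'n with CARD('n) = n.
   A family S = {v_alpha} of n vectors is a function v :: 'n => 'n => int,
   where v alpha j = <v_alpha, e_j>. *)

definition dotZ :: "('n::finite \<Rightarrow> int) \<Rightarrow> ('n \<Rightarrow> int) \<Rightarrow> int" where
  "dotZ x y = (\<Sum>j\<in>UNIV. x j * y j)"

definition orthogonal_family :: "('n::finite \<Rightarrow> 'n \<Rightarrow> int) \<Rightarrow> bool" where
  "orthogonal_family v \<longleftrightarrow>
     (\<forall>\<alpha>. dotZ (v \<alpha>) (v \<alpha>) \<ge> 1) \<and>
     (\<forall>\<alpha> \<beta>. \<alpha> \<noteq> \<beta> \<longrightarrow> dotZ (v \<alpha>) (v \<beta>) = 0)"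

definition Vset :: "('n::finite \<Rightarrow> 'n \<Rightarrow> int) \<Rightarrow> 'n \<Rightarrow> 'n set" where
  "Vset v \<alpha> = {j. v \<alpha> j \<noteq> 0}"

definition Eset :: "('n::finite \<Rightarrow> 'n \<Rightarrow> int) \<Rightarrow> 'n \<Rightarrow> 'n set" where
  "Eset v j = {\<alpha>. v \<alpha> j \<noteq> 0}"

definition P2 :: "('n::finite \<Rightarrow> 'n \<Rightarrow> int) \<Rightarrow> 'n set" where
  "P2 v = {j. card (Eset v j) = 2}"

definition Q2 :: "('n::finite \<Rightarrow> 'n \<Rightarrow> int) \<Rightarrow> 'n set" where
  "Q2 v = {i \<in> P2 v. \<exists>u\<in>Eset v i. \<bar>v u i\<bar> \<ge> 2}"

definition lattice_gen :: "('n::finite \<Rightarrow> 'n \<Rightarrow> int) \<Rightarrow> ('n \<Rightarrow> int) set" where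
  "lattice_gen v = {x. \<exists>c :: 'n \<Rightarrow> int. \<forall>j. x j = (\<Sum>\<alpha>\<in>UNIV. c \<alpha> * v \<alpha> j)}"

definition cubiquitous :: "('n::finite \<Rightarrow> int) set \<Rightarrow> bool" where
  "cubiquitous L \<longleftrightarrow> (\<forall>x :: 'n \<Rightarrow> int. \<exists>y\<in>L. \<forall>j. y j - x j \<in> {0, 1})"

end

theory Submission
  imports Defs Complex_Main "HOL-Library.FuncSet"
begin
lemma lat_coef:
  fixes v :: "'n::finite \<Rightarrow> 'n \<Rightarrow> int"
  assumes orth: "orthogonal_family v" and y: "\<forall>j. y j = (\<Sum>\<alpha>\<in>UNIV. c \<alpha> * v \<alpha> j)"
  shows "dotZ y (v a) = c a * dotZ (v a) (v a)"
proof -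
  have "dotZ y (v a) = (\<Sum>j\<in>UNIV. (\<Sum>\<alpha>\<in>UNIV. c \<alpha> * v \<alpha> j) * v a j)"
    unfolding dotZ_def using y by simp
  also have "\<dots> = (\<Sum>\<alpha>\<in>UNIV. c \<alpha> * dotZ (v \<alpha>) (v a))"
    unfolding dotZ_def sum_distrib_right sum_distrib_left
    by (subst sum.swap) (simp add: mult.assoc)
  also have "\<dots> = (\<Sum>\<alpha>\<in>UNIV. if \<alpha> = a then c a * dotZ (v a) (v a) else 0)"
    using orth unfolding orthogonal_family_def by (intro sum.cong) auto
  also have "\<dots> = c a * dotZ (v a) (v a)" by simp
  finally show ?thesis .
qed

definition Fk :: "int \<Rightarrow> int \<Rightarrow> int" where
  "Fk k m = (min (m mod (2*k)) (2*k - m mod (2*k)))^2"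

lemma Fk_le:
  fixes k m c :: int assumes "k > 0"
  shows "Fk k m \<le> (2*c*k - m)^2"
proof -
  define r where "r = m mod (2*k)"
  define q where "q = m div (2*k)"
  have m: "m = 2*k*q + r" unfolding r_def q_def by simp
  have r: "0 \<le> r" "r < 2*k" using assms unfolding r_def by auto
  have "min r (2*k - r) \<le> \<bar>2*c*k - m\<bar>"
  proof (cases "c - q \<le> 0")
    case True
    have "2*c*k - m = 2*k*(c-q) - r" using m by (simp add: algebra_simps)
    moreover have "2*k*(c-q) \<le> 0" using True assms by (simp add: mult_nonneg_nonpos)
    ultimately show ?thesis using r by linarith
  next
    case False
    have "2*c*k - m = 2*k*(c-q) - r" using m by (simp add: algebra_simps)
    moreover have "2*k*(c-q) \<ge> 2*k" using False assms by simp
    ultimately show ?thesis using r by linarith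
  qed
  moreover have "0 \<le> min r (2*k - r)" using r by simp
  ultimately have "(min r (2*k - r))^2 \<le> \<bar>2*c*k - m\<bar>^2" by (rule power_mono)
  then show ?thesis unfolding Fk_def r_def by simp
qed

lemma Fk_period: "Fk k (m + 2*k*z) = Fk k m"
  unfolding Fk_def by simp

lemma Fk_nonneg: "Fk k m \<ge> 0" unfolding Fk_def by simp

lemma bessel:
  fixes w :: "'a::finite \<Rightarrow> 'b::finite \<Rightarrow> real" and u :: "'b \<Rightarrow> real"
  assumes orth: "\<And>a b. a \<noteq> b \<Longrightarrow> (\<Sum>j\<in>UNIV. w a j * w b j) = 0"
    and pos: "\<And>a. (\<Sum>j\<in>UNIV. (w a j)^2) > 0"
  shows "(\<Sum>a\<in>UNIV. (\<Sum>j\<in>UNIV. u j * w a j)^2 / (\<Sum>j\<in>UNIV. (w a j)^2)) \<le> (\<Sum>j\<in>UNIV. (u j)^2)"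
proof -
  define K where "K a = (\<Sum>j\<in>UNIV. (w a j)^2)" for a
  define p where "p a = (\<Sum>j\<in>UNIV. u j * w a j)" for a
  define t where "t a = p a / K a" for a
  have Kp: "K a > 0" for a using pos unfolding K_def by auto
  have tK: "t a * K a = p a" for a using Kp[of a] unfolding t_def by simp
  have "0 \<le> (\<Sum>j\<in>UNIV. (u j - (\<Sum>a\<in>UNIV. t a * w a j))^2)"
    by (intro sum_nonneg) simp
  also have "\<dots> = (\<Sum>j\<in>UNIV. (u j)^2) - 2 * (\<Sum>j\<in>UNIV. u j * (\<Sum>a\<in>UNIV. t a * w a j))
        + (\<Sum>j\<in>UNIV. (\<Sum>a\<in>UNIV. t a * w a j) * (\<Sum>b\<in>UNIV. t b * w b j))"
    by (simp add: power2_diff sum.distrib sum_subtractf sum_distrib_left power2_eq_square algebra_simps)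
  also have "(\<Sum>j\<in>UNIV. u j * (\<Sum>a\<in>UNIV. t a * w a j)) = (\<Sum>a\<in>UNIV. t a * p a)"
    unfolding p_def sum_distrib_left by (subst sum.swap) (simp add: algebra_simps)
  also have "(\<Sum>j\<in>UNIV. (\<Sum>a\<in>UNIV. t a * w a j) * (\<Sum>b\<in>UNIV. t b * w b j))
      = (\<Sum>a\<in>UNIV. \<Sum>b\<in>UNIV. t a * t b * (\<Sum>j\<in>UNIV. w a j * w b j))"
  proof -
    have "(\<Sum>j\<in>UNIV. (\<Sum>a\<in>UNIV. t a * w a j) * (\<Sum>b\<in>UNIV. t b * w b j))
        = (\<Sum>j\<in>UNIV. \<Sum>a\<in>UNIV. \<Sum>b\<in>UNIV. t a * t b * (w a j * w b j))"
      unfolding sum_distrib_left sum_distrib_right by (simp add: algebra_simps)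
    also have "\<dots> = (\<Sum>a\<in>UNIV. \<Sum>j\<in>UNIV. \<Sum>b\<in>UNIV. t a * t b * (w a j * w b j))"
      by (rule sum.swap)
    also have "\<dots> = (\<Sum>a\<in>UNIV. \<Sum>b\<in>UNIV. \<Sum>j\<in>UNIV. t a * t b * (w a j * w b j))"
      by (rule sum.cong[OF refl], rule sum.swap)
    also have "\<dots> = (\<Sum>a\<in>UNIV. \<Sum>b\<in>UNIV. t a * t b * (\<Sum>j\<in>UNIV. w a j * w b j))"
      by (simp add: sum_distrib_left)
    finally show ?thesis .
  qed
  also have "\<dots> = (\<Sum>a\<in>UNIV. t a * t a * K a)"
  proof (rule sum.cong[OF refl])
    fix a
    have "(\<Sum>b\<in>UNIV. t a * t b * (\<Sum>j\<in>UNIV. w a j * w b j))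
        = (\<Sum>b\<in>UNIV. if b = a then t a * t a * K a else 0)"
      using orth unfolding K_def by (intro sum.cong) (auto simp: power2_eq_square)
    then show "(\<Sum>b\<in>UNIV. t a * t b * (\<Sum>j\<in>UNIV. w a j * w b j)) = t a * t a * K a" by simp
  qed
  also have "(\<Sum>a\<in>UNIV. t a * t a * K a) = (\<Sum>a\<in>UNIV. t a * p a)"
    using tK by (simp add: mult.assoc)
  finally have "(\<Sum>a\<in>UNIV. t a * p a) \<le> (\<Sum>j\<in>UNIV. (u j)^2)" by simp
  moreover have "t a * p a = (p a)^2 / K a" for a unfolding t_def by (simp add: power2_eq_square)
  ultimately show ?thesis unfolding p_def K_def by simp
qed

lemma block:
  fixes k C s :: int
  assumes k: "k \<ge> 1" and s: "s = 1 \<or> s = -1" and ev: "even (C - k)"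
  shows "k^2 + (if k \<ge> 3 then 1 else 0) \<le> (\<Sum>i\<in>{0..<k}. Fk k (C + 2*s*i))"
proof -
  obtain w where w: "C - k = 2*w" using ev by (metis evenE)
  have ss: "s*s = 1" using s by auto
  define i0 where "i0 = (-s*w) mod k"
  have i0: "i0 \<in> {0..<k}" unfolding i0_def using k by auto
  have "C + 2*s*i0 = k + 2*k*(-s*((-s*w) div k))"
  proof -
    have "i0 = -s*w - k*((-s*w) div k)" unfolding i0_def by (simp add: minus_div_mult_eq_mod[symmetric])
    then have "2*s*i0 = 2*s*(-s*w - k*((-s*w) div k))" by simp
    then have "2*s*i0 = -2*(s*s)*w - 2*k*(s*((-s*w) div k))" by (simp add: algebra_simps)
    then show ?thesis using w ss by (simp add: algebra_simps)
  qed
  then have "(C + 2*s*i0) mod (2*k) = (k + (2*k)*(-s*((-s*w) div k))) mod (2*k)"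
    by (simp add: mult.assoc)
  also have "\<dots> = k mod (2*k)" by (rule mod_mult_self2)
  also have "\<dots> = k" using k by (intro mod_pos_pos_trivial) auto
  finally have F0: "Fk k (C + 2*s*i0) = k^2" unfolding Fk_def by simp
  have main: "k^2 \<le> (\<Sum>i\<in>{0..<k}. Fk k (C + 2*s*i))"
  proof -
    have "k^2 = (\<Sum>i\<in>{i0}. Fk k (C + 2*s*i))" using F0 by simp
    also have "\<dots> \<le> (\<Sum>i\<in>{0..<k}. Fk k (C + 2*s*i))"
      by (rule sum_mono2) (use i0 Fk_nonneg in auto)
    finally show ?thesis .
  qed
  show ?thesis
  proof (cases "k \<ge> 3")
    case False then show ?thesis using main by simp
  next
    case True
    define i1 where "i1 = (-s*(w-1)) mod k"
    have i1: "i1 \<in> {0..<k}" unfolding i1_def using k by auto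
    have e1: "C + 2*s*i1 = (k+2) + 2*k*(-s*((-s*(w-1)) div k))"
    proof -
      have "i1 = -s*(w-1) - k*((-s*(w-1)) div k)" unfolding i1_def by (simp add: minus_div_mult_eq_mod[symmetric])
      then have "2*s*i1 = 2*s*(-s*(w-1) - k*((-s*(w-1)) div k))" by simp
      then have "2*s*i1 = -2*(s*s)*(w-1) - 2*k*(s*((-s*(w-1)) div k))" by (simp add: algebra_simps)
      then show ?thesis using w ss by (simp add: algebra_simps)
    qed
    have "(C + 2*s*i1) mod (2*k) = ((k+2) + (2*k)*(-s*((-s*(w-1)) div k))) mod (2*k)"
      using e1 by (simp add: mult.assoc)
    also have "\<dots> = (k+2) mod (2*k)" by (rule mod_mult_self2)
    also have "\<dots> = k+2" using True by (intro mod_pos_pos_trivial) auto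
    finally have F1: "Fk k (C + 2*s*i1) = (k-2)^2"
      unfolding Fk_def using True by (simp add: min_def)
    have "i0 \<noteq> i1"
    proof
      assume "i0 = i1"
      then have "k + 2*k*(-s*((-s*w) div k)) = (k+2) + 2*k*(-s*((-s*(w-1)) div k))"
        using e1 \<open>C + 2*s*i0 = _\<close> by simp
      then have "2 = 2*k*((-s*((-s*w) div k)) - (-s*((-s*(w-1)) div k)))" by (simp add: algebra_simps)
      then have "k dvd 1" by (metis dvd_triv_left mult.assoc mult_cancel_left1 zero_neq_numeral
          dvd_mult_cancel_left mult_2 one_add_one)
      then show False using True by auto
    qed
    have "(1::int) * 1 \<le> (k-2)*(k-2)" using True by (intro mult_mono) auto
    then have "k^2 + 1 \<le> k^2 + (k-2)^2" by (simp add: power2_eq_square)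
    also have "\<dots> = (\<Sum>i\<in>{i0,i1}. Fk k (C + 2*s*i))" using F0 F1 \<open>i0 \<noteq> i1\<close> by simp
    also have "\<dots> \<le> (\<Sum>i\<in>{0..<k}. Fk k (C + 2*s*i))"
      by (rule sum_mono2) (use i0 i1 Fk_nonneg in auto)
    finally show ?thesis using True by simp
  qed
qed


definition mval :: "('n::finite \<Rightarrow> int) \<Rightarrow> ('n \<Rightarrow> int) \<Rightarrow> int" where
  "mval w x = (\<Sum>j\<in>UNIV. (2 * x j + 1) * w j)"

lemma mval_upd: "mval w (x(j0 := a)) = mval w x + 2*(a - x j0)*w j0"
proof -
  have "mval w (x(j0 := a)) = (\<Sum>j\<in>UNIV. (2 * x j + 1) * w j + (if j = j0 then 2*(a - x j0)*w j0 else 0))"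
    unfolding mval_def by (intro sum.cong) (auto simp: algebra_simps)
  also have "\<dots> = mval w x + 2*(a - x j0)*w j0"
    unfolding mval_def by (simp add: sum.distrib)
  finally show ?thesis .
qed

lemma mval_parity:
  assumes "\<forall>j. w j \<in> {-1,0,1}"
  shows "even (mval w x - (\<Sum>j\<in>UNIV. (w j)^2))"
proof -
  have "mval w x - (\<Sum>j\<in>UNIV. (w j)^2) = (\<Sum>j\<in>UNIV. (2 * x j + 1) * w j - (w j)^2)"
    unfolding mval_def by (simp add: sum_subtractf)
  also have "even \<dots>"
  proof (rule dvd_sum)
    fix j
    have "w j = -1 \<or> w j = 0 \<or> w j = 1" using assms by auto
    then show "even ((2 * x j + 1) * w j - (w j)^2)"
      by (auto simp: algebra_simps power2_eq_square)
  qed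
  finally show ?thesis .
qed

lemma avg:
  fixes w :: "'n::finite \<Rightarrow> int" and T k :: int
  assumes w: "\<forall>j. w j \<in> {-1,0,1}" and j0: "w j0 \<noteq> 0" and kdef: "k = (\<Sum>j\<in>UNIV. (w j)^2)"
    and kT: "k dvd T" and T: "T > 0"
    and B: "B = PiE UNIV (\<lambda>_. {0..<T})"
  shows "(k^2 + (if k \<ge> 3 then 1 else 0)) * int (card B) \<le> k * (\<Sum>x\<in>B. Fk k (mval w x))"
proof -
  define s where "s = w j0"
  have s: "s = 1 \<or> s = -1" using w j0 unfolding s_def by auto
  have "(w j0)^2 \<le> k" unfolding kdef by (rule member_le_sum) auto
  then have k1: "k \<ge> 1" using s unfolding s_def by auto
  obtain q where q: "T = k * q" using kT by (auto elim: dvdE)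
  have memB: "x \<in> B \<longleftrightarrow> (\<forall>j. 0 \<le> x j \<and> x j < T)" for x
    unfolding B by (auto simp: PiE_iff)
  have finB: "finite B" unfolding B by (intro finite_PiE) auto
  define \<sigma> where "\<sigma> i x = x(j0 := (x j0 + i) mod T)" for i :: int and x :: "'n \<Rightarrow> int"
  define \<tau> where "\<tau> i x = x(j0 := (x j0 - i) mod T)" for i :: int and x :: "'n \<Rightarrow> int"
  define F where "F x = Fk k (mval w x)" for x
  have reidx: "(\<Sum>x\<in>B. F (\<sigma> i x)) = (\<Sum>x\<in>B. F x)" for i
  proof (rule sum.reindex_bij_witness[where i="\<tau> i" and j="\<sigma> i"])
    fix a assume "a \<in> B"
    then have a: "0 \<le> a j0" "a j0 < T" using memB by auto
    have "((a j0 + i) mod T - i) mod T = a j0"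
      using a by (simp add: mod_diff_left_eq)
    then show "\<tau> i (\<sigma> i a) = a" unfolding \<sigma>_def \<tau>_def by auto
    show "\<sigma> i a \<in> B" using \<open>a \<in> B\<close> T unfolding memB \<sigma>_def by auto
    show "F (\<sigma> i a) = F (\<sigma> i a)" by simp
  next
    fix b assume "b \<in> B"
    then have b: "0 \<le> b j0" "b j0 < T" using memB by auto
    have "((b j0 - i) mod T + i) mod T = b j0"
      using b by (simp add: mod_add_left_eq)
    then show "\<sigma> i (\<tau> i b) = b" unfolding \<sigma>_def \<tau>_def by auto
    show "\<tau> i b \<in> B" using \<open>b \<in> B\<close> T unfolding memB \<tau>_def by auto
  qed
  have shift: "F (\<sigma> i x) = Fk k (mval w x + 2*s*i)" for i x
  proof -
    define d where "d = (x j0 + i) div T"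
    have "(x j0 + i) mod T = x j0 + i - T * d" unfolding d_def by (simp add: minus_div_mult_eq_mod[symmetric])
    then have "mval w (\<sigma> i x) = mval w x + 2*(i - T*d)*s"
      unfolding \<sigma>_def s_def by (simp add: mval_upd)
    also have "\<dots> = (mval w x + 2*s*i) + 2*k*(-(s*q*d))" using q by (simp add: algebra_simps)
    finally have "mval w (\<sigma> i x) = (mval w x + 2*s*i) + 2*k*(-(s*q*d))" .
    then show ?thesis unfolding F_def by (metis Fk_period)
  qed
  have "k * (\<Sum>x\<in>B. F x) = (\<Sum>i\<in>{0..<k}. \<Sum>x\<in>B. F x)"
    using k1 by simp
  also have "\<dots> = (\<Sum>i\<in>{0..<k}. \<Sum>x\<in>B. F (\<sigma> i x))" using reidx by simp
  also have "\<dots> = (\<Sum>x\<in>B. \<Sum>i\<in>{0..<k}. Fk k (mval w x + 2*s*i))"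
    by (subst sum.swap) (simp add: shift)
  also have "\<dots> \<ge> (\<Sum>x\<in>B. k^2 + (if k \<ge> 3 then 1 else 0))"
  proof (rule sum_mono)
    fix x assume "x \<in> B"
    have "even (mval w x - k)" using mval_parity[OF w] kdef by simp
    then show "k^2 + (if k \<ge> 3 then 1 else 0) \<le> (\<Sum>i\<in>{0..<k}. Fk k (mval w x + 2*s*i))"
      by (rule block[OF k1 s])
  qed
  finally show ?thesis unfolding F_def by (simp add: mult.commute)
qed


lemma caseB:
  fixes v :: "'n::finite \<Rightarrow> 'n \<Rightarrow> int"
  assumes orth: "orthogonal_family v" and ent: "\<forall>\<alpha> j. v \<alpha> j \<in> {-1,0,1}"
    and supp: "\<forall>\<alpha>. \<exists>j. v \<alpha> j \<noteq> 0" and big: "dotZ (v \<alpha>0) (v \<alpha>0) \<ge> 3"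
  shows "\<not> cubiquitous (lattice_gen v)"
proof
  assume cub: "cubiquitous (lattice_gen v)"
  define k where "k \<alpha> = dotZ (v \<alpha>) (v \<alpha>)" for \<alpha>
  have kdef: "k \<alpha> = (\<Sum>j\<in>UNIV. (v \<alpha> j)^2)" for \<alpha> unfolding k_def dotZ_def by (simp add: power2_eq_square)
  have k1: "k \<alpha> \<ge> 1" for \<alpha> using orth unfolding k_def orthogonal_family_def by auto
  have orth0: "\<alpha> \<noteq> \<beta> \<Longrightarrow> dotZ (v \<alpha>) (v \<beta>) = 0" for \<alpha> \<beta> using orth unfolding orthogonal_family_def by auto
  define n where "n = real (card (UNIV::'n set))"
  have perx: "(\<Sum>\<alpha>\<in>UNIV. real_of_int (Fk (k \<alpha>) (mval (v \<alpha>) x)) / real_of_int (k \<alpha>)) \<le> n" for x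
  proof -
    obtain y where yL: "y \<in> lattice_gen v" and yx: "\<forall>j. y j - x j \<in> {0,1}"
      using cub unfolding cubiquitous_def by blast
    obtain c where c: "\<forall>j. y j = (\<Sum>\<alpha>\<in>UNIV. c \<alpha> * v \<alpha> j)" using yL unfolding lattice_gen_def by blast
    define u where "u j = real_of_int (2 * y j - 2 * x j - 1)" for j
    define w where "w \<alpha> j = real_of_int (v \<alpha> j)" for \<alpha> j
    have bes: "(\<Sum>a\<in>UNIV. (\<Sum>j\<in>UNIV. u j * w a j)^2 / (\<Sum>j\<in>UNIV. (w a j)^2)) \<le> (\<Sum>j\<in>UNIV. (u j)^2)"
    proof (rule bessel)
      fix a b :: 'n assume "a \<noteq> b"
      then have "real_of_int (dotZ (v a) (v b)) = 0" using orth0 by simp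
      then show "(\<Sum>j\<in>UNIV. w a j * w b j) = 0" unfolding w_def dotZ_def by simp
    next
      fix a
      have "real_of_int (k a) > 0" using k1[of a] by simp
      then show "(\<Sum>j\<in>UNIV. (w a j)^2) > 0" unfolding w_def kdef by simp
    qed
    have usq: "(\<Sum>j\<in>UNIV. (u j)^2) = n"
    proof -
      have "(u j)^2 = 1" for j
      proof -
        have "2*y j - 2*x j - 1 \<in> {1,-1}" using yx[rule_format, of j] by auto
        then have "(2*y j - 2*x j - 1)^2 = (1::int)" by auto
        then show ?thesis unfolding u_def by (metis of_int_1 of_int_power)
      qed
      then show ?thesis unfolding n_def by simp
    qed
    have trm: "real_of_int (Fk (k a) (mval (v a) x)) / real_of_int (k a)
        \<le> (\<Sum>j\<in>UNIV. u j * w a j)^2 / (\<Sum>j\<in>UNIV. (w a j)^2)" for a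
    proof -
      have "(\<Sum>j\<in>UNIV. (2 * y j - 2 * x j - 1) * v a j) = 2 * dotZ y (v a) - mval (v a) x"
        unfolding dotZ_def mval_def by (simp add: sum_subtractf sum_distrib_left algebra_simps)
      also have "\<dots> = 2 * c a * k a - mval (v a) x"
        using lat_coef[OF orth c] unfolding k_def by simp
      finally have e: "(\<Sum>j\<in>UNIV. u j * w a j) = real_of_int (2 * c a * k a - mval (v a) x)"
        unfolding u_def w_def by (metis (mono_tags, lifting) of_int_mult of_int_sum sum.cong)
      have e2: "(\<Sum>j\<in>UNIV. (w a j)^2) = real_of_int (k a)" unfolding w_def kdef by simp
      have "Fk (k a) (mval (v a) x) \<le> (2 * c a * k a - mval (v a) x)^2"
        using Fk_le k1[of a] by simp
      then have "real_of_int (Fk (k a) (mval (v a) x)) \<le> (real_of_int (2 * c a * k a - mval (v a) x))^2"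
        by (metis of_int_le_iff of_int_power)
      then show ?thesis unfolding e e2 using k1[of a] by (simp add: divide_right_mono)
    qed
    have "(\<Sum>\<alpha>\<in>UNIV. real_of_int (Fk (k \<alpha>) (mval (v \<alpha>) x)) / real_of_int (k \<alpha>))
        \<le> (\<Sum>a\<in>UNIV. (\<Sum>j\<in>UNIV. u j * w a j)^2 / (\<Sum>j\<in>UNIV. (w a j)^2))"
      by (rule sum_mono) (rule trm)
    then show ?thesis using bes usq by simp
  qed
  define T where "T = (\<Prod>\<alpha>\<in>UNIV. k \<alpha>)"
  have Tpos: "T > 0" unfolding T_def using k1 by (intro prod_pos) (auto intro: less_le_trans[of 0 1])
  have kT: "k \<alpha> dvd T" for \<alpha> unfolding T_def by (rule dvd_prodI) auto
  define B where "B = PiE (UNIV::'n set) (\<lambda>_. {0..<T})"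
  have finB: "finite B" unfolding B_def by (intro finite_PiE) auto
  have "(\<lambda>_. 0) \<in> B" unfolding B_def using Tpos by (auto simp: PiE_iff)
  then have cB: "card B > 0" using finB card_gt_0_iff by blast
  define S where "S \<alpha> = (\<Sum>x\<in>B. Fk (k \<alpha>) (mval (v \<alpha>) x))" for \<alpha>
  have avg\<alpha>: "(k \<alpha>^2 + (if k \<alpha> \<ge> 3 then 1 else 0)) * int (card B) \<le> k \<alpha> * S \<alpha>" for \<alpha>
  proof -
    obtain j0 where "v \<alpha> j0 \<noteq> 0" using supp by blast
    then show ?thesis unfolding S_def
      using avg[of "v \<alpha>" j0 "k \<alpha>" T B] ent kdef kT Tpos B_def by blast
  qed
  have ge: "real (card B) \<le> real_of_int (S \<alpha>) / real_of_int (k \<alpha>)" for \<alpha>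
  proof -
    have "k \<alpha>^2 * int (card B) \<le> (k \<alpha>^2 + (if k \<alpha> \<ge> 3 then 1 else 0)) * int (card B)"
      by (intro mult_right_mono) auto
    also have "\<dots> \<le> k \<alpha> * S \<alpha>" by (rule avg\<alpha>)
    finally have "k \<alpha> * (k \<alpha> * int (card B)) \<le> k \<alpha> * S \<alpha>"
      by (simp add: power2_eq_square algebra_simps)
    then have "k \<alpha> * int (card B) \<le> S \<alpha>" using k1[of \<alpha>] by (simp add: mult_le_cancel_left)
    then have "real_of_int (k \<alpha>) * real (card B) \<le> real_of_int (S \<alpha>)" by (metis of_int_le_iff of_int_mult of_int_of_nat_eq)
    then show ?thesis using k1[of \<alpha>] by (simp add: field_simps)
  qed
  have gt: "real (card B) < real_of_int (S \<alpha>0) / real_of_int (k \<alpha>0)"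
  proof -
    have k3: "k \<alpha>0 \<ge> 3" using big unfolding k_def .
    have "(k \<alpha>0^2 + 1) * int (card B) \<le> k \<alpha>0 * S \<alpha>0"
      using avg\<alpha>[of \<alpha>0] k3 by simp
    then have "k \<alpha>0 * (k \<alpha>0 * int (card B)) + int (card B) \<le> k \<alpha>0 * S \<alpha>0"
      by (simp add: power2_eq_square algebra_simps)
    then have "k \<alpha>0 * (k \<alpha>0 * int (card B)) < k \<alpha>0 * S \<alpha>0" using cB by linarith
    then have "k \<alpha>0 * int (card B) < S \<alpha>0" using k1[of \<alpha>0] by (simp add: mult_less_cancel_left)
    then have "real_of_int (k \<alpha>0) * real (card B) < real_of_int (S \<alpha>0)" by (metis of_int_less_iff of_int_mult of_int_of_nat_eq)
    then show ?thesis using k1[of \<alpha>0] by (simp add: field_simps)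
  qed
  have "n * real (card B) = (\<Sum>\<alpha>\<in>(UNIV::'n set). real (card B))" unfolding n_def by simp
  also have "\<dots> < (\<Sum>\<alpha>\<in>UNIV. real_of_int (S \<alpha>) / real_of_int (k \<alpha>))"
    by (rule sum_strict_mono_ex1) (use ge gt in auto)
  also have "\<dots> = (\<Sum>x\<in>B. \<Sum>\<alpha>\<in>UNIV. real_of_int (Fk (k \<alpha>) (mval (v \<alpha>) x)) / real_of_int (k \<alpha>))"
    unfolding S_def by (subst sum.swap) (simp add: sum_divide_distrib)
  also have "\<dots> \<le> (\<Sum>x\<in>B. n)" by (rule sum_mono) (rule perx)
  also have "\<dots> = n * real (card B)" by simp
  finally show False by simp
qed


lemma dotZ_lin: "dotZ (\<lambda>j. x j - d * z j) w = dotZ x w - d * dotZ z w"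
  unfolding dotZ_def by (simp add: sum_subtractf sum_distrib_left algebra_simps)

lemma dotZ_scale: "dotZ (\<lambda>j. d * z j) w = d * dotZ z w"
  unfolding dotZ_def by (simp add: sum_distrib_left algebra_simps)

lemma dotZ_unit: "dotZ (\<lambda>i. if i = j then 1 else 0) w = w j"
proof -
  have "dotZ (\<lambda>i. if i = j then 1 else 0) w = (\<Sum>i\<in>UNIV. if i = j then w i else 0)"
    unfolding dotZ_def by (intro sum.cong) auto
  then show ?thesis by simp
qed

lemma caseA:
  fixes v :: "'n::finite \<Rightarrow> 'n \<Rightarrow> int"
  assumes orth: "orthogonal_family v" and two: "card (Vset v \<alpha>) \<ge> 2"
    and big: "\<bar>v \<alpha> j1\<bar> \<ge> 2"
  shows "\<not> cubiquitous (lattice_gen v)"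
proof
  assume cub: "cubiquitous (lattice_gen v)"
  define w where "w = v \<alpha>"
  define k where "k = dotZ w w"
  define N where "N = (\<Sum>j\<in>UNIV. \<bar>w j\<bar>)"
  define S where "S = (\<Sum>j\<in>UNIV. w j)"
  define P where "P g \<longleftrightarrow> g > 0 \<and> (\<exists>x. dotZ x w = int g)" for g :: nat
  have "P (nat ((w j1)^2))"
  proof -
    have "dotZ (\<lambda>i. w j1 * (if i = j1 then 1 else 0)) w = (w j1)^2"
      using dotZ_scale[of "w j1" "\<lambda>i. if i = j1 then 1 else 0" w] dotZ_unit[of j1 w]
      by (simp add: power2_eq_square)
    moreover have "(w j1)^2 > 0" using big unfolding w_def by auto
    moreover have "int (nat ((w j1)^2)) = (w j1)^2" by simp
    ultimately show ?thesis unfolding P_def by (metis zero_less_nat_eq)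
  qed
  define g where "g = (LEAST g. P g)"
  have Pg: "P g" unfolding g_def by (rule LeastI) fact
  then obtain x0 where x0: "dotZ x0 w = int g" and g0: "g > 0" unfolding P_def by auto
  have gdvd: "int g dvd dotZ x w" for x
  proof -
    define t where "t = dotZ x w"
    have "t mod int g = dotZ (\<lambda>j. x j - (t div int g) * x0 j) w"
      unfolding dotZ_lin x0 t_def by (simp add: minus_div_mult_eq_mod[symmetric] algebra_simps)
    moreover have "0 \<le> t mod int g" "t mod int g < int g" using g0 by auto
    moreover have "\<not> (t mod int g > 0)"
    proof
      assume h: "t mod int g > 0"
      have "P (nat (t mod int g))" unfolding P_def using h \<open>t mod int g = _\<close> by auto
      moreover have "nat (t mod int g) < g" using \<open>t mod int g < int g\<close> h by (simp add: nat_less_iff)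
      ultimately show False using not_less_Least[of "nat (t mod int g)" P] unfolding g_def by blast
    qed
    ultimately have "t mod int g = 0" by linarith
    then show ?thesis unfolding t_def by auto
  qed
  have gw: "int g dvd w j" for j using gdvd[of "\<lambda>i. if i = j then 1 else 0"] by (simp add: dotZ_unit)
  have kN: "k - N = (\<Sum>j\<in>UNIV. \<bar>w j\<bar> * (\<bar>w j\<bar> - 1))"
  proof -
    have "k - N = (\<Sum>j\<in>UNIV. w j * w j - \<bar>w j\<bar>)"
      unfolding k_def N_def dotZ_def by (simp add: sum_subtractf)
    also have "\<dots> = (\<Sum>j\<in>UNIV. \<bar>w j\<bar> * (\<bar>w j\<bar> - 1))"
      by (intro sum.cong refl) (simp add: algebra_simps abs_mult_self_eq)
    finally show ?thesis .
  qed
  have tnn: "\<bar>w j\<bar> * (\<bar>w j\<bar> - 1) \<ge> 0" for j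
  proof (cases "w j = 0")
    case False then have "\<bar>w j\<bar> \<ge> 1" by linarith
    then show ?thesis by simp
  qed simp
  have key: "N + int g < k"
  proof (cases "g = 1")
    case True
    have "\<bar>w j1\<bar> * (\<bar>w j1\<bar> - 1) \<ge> 2 * 1" using big unfolding w_def by (intro mult_mono) auto
    moreover have "\<bar>w j1\<bar> * (\<bar>w j1\<bar> - 1) \<le> k - N" unfolding kN
      by (rule member_le_sum) (use tnn in auto)
    ultimately show ?thesis using True by simp
  next
    case False
    then have g2: "int g \<ge> 2" using g0 by auto
    have "2 \<le> card (Vset v \<alpha>)" by (fact two)
    then obtain a where a: "a \<in> Vset v \<alpha>" by fastforce
    have "card (Vset v \<alpha> - {a}) \<ge> 1" using two a by (simp add: card_Diff_singleton)
    then have "Vset v \<alpha> - {a} \<noteq> {}" by (metis card.empty not_one_le_zero)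
    then obtain b where b: "b \<in> Vset v \<alpha> - {a}" by blast
    have ab: "a \<in> Vset v \<alpha>" "b \<in> Vset v \<alpha>" "a \<noteq> b" using a b by auto
    have tg: "\<bar>w j\<bar> * (\<bar>w j\<bar> - 1) \<ge> int g" if "j \<in> Vset v \<alpha>" for j
    proof -
      have "w j \<noteq> 0" using that unfolding Vset_def w_def by auto
      then have "int g \<le> \<bar>w j\<bar>" using dvd_imp_le_int[OF _ gw[of j]] by simp
      then have "int g * 1 \<le> \<bar>w j\<bar> * (\<bar>w j\<bar> - 1)" using g2 by (intro mult_mono) auto
      then show ?thesis by simp
    qed
    have "2 * int g \<le> (\<Sum>j\<in>{a,b}. \<bar>w j\<bar> * (\<bar>w j\<bar> - 1))" using tg[OF ab(1)] tg[OF ab(2)] ab(3) by simp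
    also have "\<dots> \<le> k - N" unfolding kN by (rule sum_mono2) (use tnn in auto)
    finally show ?thesis using g2 by simp
  qed
  define q where "q = (N - S) div (2 * int g) + 1"
  define x where "x j = q * x0 j" for j
  define m where "m = mval w x"
  have m: "m = 2 * q * int g + S"
  proof -
    have "m = 2 * dotZ x w + S" unfolding m_def mval_def dotZ_def S_def
      by (simp add: sum.distrib sum_distrib_left algebra_simps)
    also have "dotZ x w = q * int g" unfolding x_def using dotZ_scale[of q x0 w] x0 by simp
    finally show ?thesis by simp
  qed
  have mlo: "N < m" and mhi: "m \<le> N + 2 * int g"
  proof -
    define r where "r = (N - S) mod (2 * int g)"
    have "N - S = 2 * int g * ((N - S) div (2 * int g)) + r" unfolding r_def by simp
    then have "m = N - r + 2 * int g" unfolding m q_def by (simp add: algebra_simps)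
    moreover have "0 \<le> r" "r < 2 * int g" unfolding r_def using g0 by auto
    ultimately show "N < m" "m \<le> N + 2 * int g" by auto
  qed
  obtain y where yL: "y \<in> lattice_gen v" and yx: "\<forall>j. y j - x j \<in> {0,1}"
    using cub unfolding cubiquitous_def by blast
  obtain c where c: "\<forall>j. y j = (\<Sum>\<beta>\<in>UNIV. c \<beta> * v \<beta> j)" using yL unfolding lattice_gen_def by blast
  have "(\<Sum>j\<in>UNIV. (2 * y j - 2 * x j - 1) * w j) = 2 * dotZ y w - m"
    unfolding dotZ_def m_def mval_def by (simp add: sum_subtractf sum_distrib_left algebra_simps)
  also have "\<dots> = 2 * c \<alpha> * k - m" using lat_coef[OF orth c, of \<alpha>] unfolding k_def w_def by simp
  finally have e: "(\<Sum>j\<in>UNIV. (2 * y j - 2 * x j - 1) * w j) = 2 * c \<alpha> * k - m" .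
  have "\<bar>\<Sum>j\<in>UNIV. (2 * y j - 2 * x j - 1) * w j\<bar> \<le> (\<Sum>j\<in>UNIV. \<bar>(2 * y j - 2 * x j - 1) * w j\<bar>)"
    by (rule sum_abs)
  also have "\<dots> = N" unfolding N_def
  proof (rule sum.cong[OF refl])
    fix j
    have "\<bar>2 * y j - 2 * x j - 1\<bar> = 1" using yx[rule_format, of j] by auto
    then show "\<bar>(2 * y j - 2 * x j - 1) * w j\<bar> = \<bar>w j\<bar>" by (simp add: abs_mult)
  qed
  finally have bnd: "\<bar>2 * c \<alpha> * k - m\<bar> \<le> N" using e by simp
  show False
  proof (cases "c \<alpha> \<le> 0")
    case True
    have "N \<ge> 0" unfolding N_def by (rule sum_nonneg) simp
    then have "k > 0" using key by linarith
    then have "2 * c \<alpha> * k \<le> 0" using True by (simp add: mult_nonpos_nonneg)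
    then show False using bnd mlo by linarith
  next
    case False
    have "N \<ge> 0" unfolding N_def by (rule sum_nonneg) simp
    then have "k > 0" using key by linarith
    then have "2 * c \<alpha> * k \<ge> 2 * k" using False by simp
    then show False using bnd mhi key by linarith
  qed
qed


lemma card_as_sum: "card {a::'a::finite. P a} = (\<Sum>a\<in>UNIV. if P a then 1 else 0)"
proof -
  have "card {a::'a. P a} = (\<Sum>a\<in>{a\<in>UNIV. P a}. 1)" by simp
  also have "\<dots> = (\<Sum>a\<in>UNIV. if P a then 1 else 0)" by (rule sum.inter_filter) simp
  finally show ?thesis .
qed

lemma three_signs:
  fixes a1 a2 a3 b1 b2 b3 :: int
  assumes "a1 \<in> {1,-1}" "a2 \<in> {1,-1}" "a3 \<in> {1,-1}" "b1 \<in> {1,-1}" "b2 \<in> {1,-1}" "b3 \<in> {1,-1}"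
    "a1*a2+b1*b2 = 0" "a1*a3+b1*b3 = 0" "a2*a3+b2*b3 = 0"
  shows False
  using assms by auto

lemma caseC:
  fixes v :: "'n::finite \<Rightarrow> 'n \<Rightarrow> int"
  assumes orth: "orthogonal_family v" and ent: "\<forall>\<alpha> j. v \<alpha> j \<in> {-1,0,1}"
    and k2: "\<forall>\<alpha>. card (Vset v \<alpha>) = 2"
  shows "\<exists>j. card (Eset v j) = 2"
proof -
  have orth0: "\<alpha> \<noteq> \<beta> \<Longrightarrow> dotZ (v \<alpha>) (v \<beta>) = 0" for \<alpha> \<beta> using orth unfolding orthogonal_family_def by auto
  have other: "\<exists>p. p \<noteq> j \<and> Vset v \<alpha> = {j, p}" if "\<alpha> \<in> Eset v j" for \<alpha> j
  proof -
    obtain x y where xy: "Vset v \<alpha> = {x,y}" "x \<noteq> y" using k2 card_2_iff by metis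
    have "j \<in> Vset v \<alpha>" using that unfolding Eset_def Vset_def by auto
    then show ?thesis using xy by auto
  qed
  have pm: "v \<alpha> i \<in> {1,-1}" if "i \<in> Vset v \<alpha>" for \<alpha> i using ent that unfolding Vset_def by auto
  have zero: "v \<alpha> i = 0" if "i \<notin> Vset v \<alpha>" for \<alpha> i using that unfolding Vset_def by auto
  have pair: "Vset v \<beta> = Vset v \<alpha> \<and> v \<alpha> j * v \<beta> j + v \<alpha> p * v \<beta> p = 0"
    if H: "\<alpha> \<in> Eset v j" "\<beta> \<in> Eset v j" "\<alpha> \<noteq> \<beta>" "p \<noteq> j" "Vset v \<alpha> = {j, p}" for \<alpha> \<beta> j p
  proof -
    obtain p' where p': "p' \<noteq> j" "Vset v \<beta> = {j, p'}" using other[OF H(2)] by blast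
    have "dotZ (v \<alpha>) (v \<beta>) = (\<Sum>i\<in>{j,p}. v \<alpha> i * v \<beta> i)"
      unfolding dotZ_def by (rule sum.mono_neutral_right) (use zero H(5) in auto)
    also have "\<dots> = v \<alpha> j * v \<beta> j + v \<alpha> p * v \<beta> p" using H(4) by simp
    finally have d: "v \<alpha> j * v \<beta> j + v \<alpha> p * v \<beta> p = 0" using orth0[OF H(3)] by simp
    have "p' = p"
    proof (rule ccontr)
      assume "p' \<noteq> p"
      then have "v \<beta> p = 0" using zero[of p \<beta>] p' H(4) by auto
      moreover have "v \<alpha> j \<in> {1,-1}" "v \<beta> j \<in> {1,-1}" using pm H(5) p' by auto
      ultimately show False using d by auto
    qed
    then show ?thesis using p' H d by auto
  qed
  have le2: "card (Eset v j) \<le> 2" for j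
  proof (rule ccontr)
    assume "\<not> ?thesis"
    then have c3: "card (Eset v j) \<ge> 3" by simp
    then obtain a where a: "a \<in> Eset v j" by fastforce
    have "card (Eset v j - {a}) \<ge> 2" using c3 a by (simp add: card_Diff_singleton)
    then have "Eset v j - {a} \<noteq> {}" by fastforce
    then obtain b where b: "b \<in> Eset v j - {a}" by blast
    have "card (Eset v j - {a} - {b}) \<ge> 1" using c3 a b by (simp add: card_Diff_singleton)
    then have "Eset v j - {a} - {b} \<noteq> {}" by (metis card.empty not_one_le_zero)
    then obtain c where c: "c \<in> Eset v j - {a} - {b}" by blast
    obtain p where p: "p \<noteq> j" "Vset v a = {j, p}" using other a by blast
    have ab: "Vset v b = Vset v a" "v a j * v b j + v a p * v b p = 0" using pair[of a j b p] a b p by auto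
    have ac: "Vset v c = Vset v a" "v a j * v c j + v a p * v c p = 0" using pair[of a j c p] a c p by auto
    have bc: "v b j * v c j + v b p * v c p = 0" using pair[of b j c p] b c p ab(1) by auto
    have sg: "v a j \<in> {1,-1}" "v b j \<in> {1,-1}" "v c j \<in> {1,-1}"
         "v a p \<in> {1,-1}" "v b p \<in> {1,-1}" "v c p \<in> {1,-1}"
      using pm p ab(1) ac(1) by auto
    show False by (rule three_signs[OF sg ab(2) ac(2) bc])
  qed
  have "(\<Sum>j\<in>UNIV. card (Eset v j)) = (\<Sum>j\<in>UNIV. \<Sum>\<alpha>\<in>UNIV. if v \<alpha> j \<noteq> 0 then 1 else 0)"
    by (simp only: Eset_def card_as_sum)
  also have "\<dots> = (\<Sum>\<alpha>\<in>UNIV. \<Sum>j\<in>UNIV. if v \<alpha> j \<noteq> 0 then 1 else 0)" by (rule sum.swap)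
  also have "\<dots> = (\<Sum>\<alpha>\<in>UNIV. card (Vset v \<alpha>))" by (simp only: Vset_def card_as_sum)
  also have "\<dots> = 2 * card (UNIV::'n set)" using k2 by simp
  finally have tot: "(\<Sum>j\<in>UNIV. card (Eset v j)) = 2 * card (UNIV::'n set)" .
  show ?thesis
  proof (rule ccontr)
    assume "\<not> ?thesis"
    then have ne: "card (Eset v j) \<noteq> 2" for j by blast
    have "card (Eset v j) \<le> 1" for j using le2[of j] ne[of j] by linarith
    then have "(\<Sum>j\<in>UNIV. card (Eset v j)) \<le> (\<Sum>j\<in>(UNIV::'n set). 1)" by (intro sum_mono) auto
    then have "2 * card (UNIV::'n set) \<le> card (UNIV::'n set)" using tot by simp
    moreover have "card (UNIV::'n set) > 0" by (simp add: card_gt_0_iff)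
    ultimately show False by simp
  qed
qed


theorem proposition4p3:
  fixes v :: "'n::finite \<Rightarrow> 'n \<Rightarrow> int"
  assumes "orthogonal_family v"
    and "\<forall>\<alpha>. card (Vset v \<alpha>) \<ge> 2"
    and "P2 v = Q2 v"
  shows "\<not> cubiquitous (lattice_gen v)"
proof (cases "\<exists>\<alpha> j. \<bar>v \<alpha> j\<bar> \<ge> 2")
  case True
  then obtain \<alpha> j where "\<bar>v \<alpha> j\<bar> \<ge> 2" by blast
  then show ?thesis using caseA[OF assms(1)] assms(2) by blast
next
  case False
  have ent: "\<forall>\<alpha> j. v \<alpha> j \<in> {-1,0,1}"
  proof (intro allI)
    fix \<alpha> j
    have "\<bar>v \<alpha> j\<bar> < 2" using False by (meson not_le)
    then show "v \<alpha> j \<in> {-1,0,1}" by auto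
  qed
  have supp: "\<forall>\<alpha>. \<exists>j. v \<alpha> j \<noteq> 0"
  proof
    fix \<alpha>
    have "Vset v \<alpha> \<noteq> {}" using assms(2) by (metis card.empty not_numeral_le_zero)
    then show "\<exists>j. v \<alpha> j \<noteq> 0" unfolding Vset_def by auto
  qed
  have kc: "dotZ (v \<alpha>) (v \<alpha>) = int (card (Vset v \<alpha>))" for \<alpha>
  proof -
    have "dotZ (v \<alpha>) (v \<alpha>) = (\<Sum>j\<in>UNIV. if v \<alpha> j \<noteq> 0 then 1 else 0)"
      unfolding dotZ_def
    proof (rule sum.cong[OF refl])
      fix j
      have "v \<alpha> j \<in> {-1,0,1}" using ent by blast
      then show "v \<alpha> j * v \<alpha> j = (if v \<alpha> j \<noteq> 0 then 1 else 0)" by auto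
    qed
    also have "\<dots> = int (card (Vset v \<alpha>))" unfolding Vset_def card_as_sum of_nat_sum by (intro sum.cong) auto
    finally show ?thesis .
  qed
  show ?thesis
  proof (cases "\<exists>\<alpha>0. dotZ (v \<alpha>0) (v \<alpha>0) \<ge> 3")
    case True
    then obtain \<alpha>0 where "dotZ (v \<alpha>0) (v \<alpha>0) \<ge> 3" by blast
    then show ?thesis using caseB[OF assms(1) ent supp] by blast
  next
    case False
    have "card (Vset v \<alpha>) = 2" for \<alpha>
    proof -
      have "\<not> dotZ (v \<alpha>) (v \<alpha>) \<ge> 3" using False by blast
      then have "card (Vset v \<alpha>) < 3" using kc[of \<alpha>] by linarith
      then show ?thesis using assms(2) by (metis le_antisym less_Suc_eq_le numeral_3_eq_3 numeral_2_eq_2)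
    qed
    then obtain j where j: "card (Eset v j) = 2" using caseC[OF assms(1) ent] by blast
    then have "j \<in> Q2 v" using assms(3) unfolding P2_def by auto
    then obtain u where "\<bar>v u j\<bar> \<ge> 2" unfolding Q2_def by auto
    moreover have "v u j \<in> {-1,0,1}" using ent by blast
    ultimately have False by auto
    then show ?thesis ..
  qed
qed

end
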